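(* For all $n\geq1$ and all formulas $\phi,\chi_1,\dots,\chi_n\in\mathcal{L}(\nabla,\bullet)$, $$\vdash_{\mathbf{K}^{\nabla\bullet}}\Delta\Big(\bigwedge_{k=1}^n\chi_k\to\phi\Big)\land\bigwedge_{k=1}^n\Delta\chi_k\land\bigwedge_{k=1}^n\circ(\phi\to\chi_k)\to\phi\vee\Delta\phi.$$
   Context: $\mathcal{L}(\nabla,\bullet)$: $\phi::=p\mid\neg\phi\mid\phi\land\phi\mid\nabla\phi\mid\bullet\phi$ over a nonempty set of propositional variables; $\Delta\phi:=\neg\nabla\phi$, $\circ\phi:=\neg\bullet\phi$. The Hilbert system $\mathbf{K}^{\nabla\bullet}$ has axioms: A0 all instances of propositional tautologies; A1 $\bullet\phi\to\phi$; A2 $\nabla\phi\leftrightarrow\nabla\neg\phi$; A3 $\bullet(\psi\to\phi)\land\phi\to\bullet\phi$; A4 $\nabla(\phi\land\psi)\to\nabla\phi\vee\nabla\psi$; A5 $\bullet(\phi\land\psi)\to\bullet\phi\vee\bullet\psi$; A6 $\nabla\phi\to\bullet\phi\vee\bullet\neg\phi$; A7 $\bullet(\phi\to\psi)\land\bullet(\neg\phi\to\chi)\to\nabla\phi$; and rules: R1 from $\phi$ infer $\Delta\phi$; R2 from $\phi$ infer $\circ\phi$; R3 from $\phi\leftrightarrow\psi$ infer $\Delta\phi\leftrightarrow\Delta\psi$; R4 from $\phi\leftrightarrow\psi$ infer $\circ\phi\leftrightarrow\circ\psi$; MP. *)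

theory Defs
  imports Main
begin

text \<open>Language L(nabla, bullet) over propositional variables of type 'p
  (every HOL type is nonempty, so the set of variables is nonempty).\<close>

datatype 'p form =
    Var 'p
  | Neg "'p form"
  | Conj "'p form" "'p form"
  | Nab "'p form"
  | Bul "'p form"

definition Disj :: "'p form \<Rightarrow> 'p form \<Rightarrow> 'p form" where
  "Disj a b = Neg (Conj (Neg a) (Neg b))"

definition Imp :: "'p form \<Rightarrow> 'p form \<Rightarrow> 'p form" where
  "Imp a b = Neg (Conj a (Neg b))"

definition Iff :: "'p form \<Rightarrow> 'p form \<Rightarrow> 'p form" where
  "Iff a b = Conj (Imp a b) (Imp b a)"

definition Delta :: "'p form \<Rightarrow> 'p form" where
  "Delta a = Neg (Nab a)"

definition Circ :: "'p form \<Rightarrow> 'p form" where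
  "Circ a = Neg (Bul a)"

fun BigConj :: "'p form list \<Rightarrow> 'p form" where
  "BigConj [] = Neg (Conj (Var undefined) (Neg (Var undefined)))"
| "BigConj [a] = a"
| "BigConj (a # b # xs) = Conj a (BigConj (b # xs))"

text \<open>Propositional evaluation: modal formulas are treated as atoms.\<close>
fun peval :: "('p form \<Rightarrow> bool) \<Rightarrow> 'p form \<Rightarrow> bool" where
  "peval V (Var p) = V (Var p)"
| "peval V (Neg a) = (\<not> peval V a)"
| "peval V (Conj a b) = (peval V a \<and> peval V b)"
| "peval V (Nab a) = V (Nab a)"
| "peval V (Bul a) = V (Bul a)"

definition taut :: "'p form \<Rightarrow> bool" where
  "taut a = (\<forall>V. peval V a)"

inductive deriv :: "'p form \<Rightarrow> bool" where
  A0: "taut a \<Longrightarrow> deriv a"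
| A1: "deriv (Imp (Bul a) a)"
| A2: "deriv (Iff (Nab a) (Nab (Neg a)))"
| A3: "deriv (Imp (Conj (Bul (Imp b a)) a) (Bul a))"
| A4: "deriv (Imp (Nab (Conj a b)) (Disj (Nab a) (Nab b)))"
| A5: "deriv (Imp (Bul (Conj a b)) (Disj (Bul a) (Bul b)))"
| A6: "deriv (Imp (Nab a) (Disj (Bul a) (Bul (Neg a))))"
| A7: "deriv (Imp (Conj (Bul (Imp a b)) (Bul (Imp (Neg a) c))) (Nab a))"
| R1: "deriv a \<Longrightarrow> deriv (Delta a)"
| R2: "deriv a \<Longrightarrow> deriv (Circ a)"
| R3: "deriv (Iff a b) \<Longrightarrow> deriv (Iff (Delta a) (Delta b))"
| R4: "deriv (Iff a b) \<Longrightarrow> deriv (Iff (Circ a) (Circ b))"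
| MP: "deriv (Imp a b) \<Longrightarrow> deriv a \<Longrightarrow> deriv b"

end

theory Submission
  imports Defs
begin

lemma deriv_chain: "deriv (foldr Imp as c) \<Longrightarrow> \<forall>a\<in>set as. deriv a \<Longrightarrow> deriv c"
  by (induction as) (auto intro: MP)

lemma deriv_taut: "taut (foldr Imp as c) \<Longrightarrow> \<forall>a\<in>set as. deriv a \<Longrightarrow> deriv c"
  using deriv_chain A0 by blast

lemmas fsimps = taut_def Imp_def Disj_def Iff_def Delta_def Circ_def

lemma delta_conj:
  "xs \<noteq> [] \<Longrightarrow> deriv (Imp (BigConj (map Delta xs)) (Delta (BigConj xs)))"
proof (induction xs rule: BigConj.induct)
  case 1 then show ?case by simp
next
  case (2 a) then show ?case by (auto intro!: A0 simp: fsimps)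
next
  case (3 a b xs)
  let ?B = "BigConj (b # xs)"
  define D where "D = BigConj (map Delta (b#xs))"
  have IH: "deriv (Imp D (Delta ?B))" using 3 by (simp add: D_def)
  have F: "deriv (Imp (Nab (Conj a ?B)) (Disj (Nab a) (Nab ?B)))" by (rule A4)
  have E: "BigConj (map Delta (a#b#xs)) = Conj (Delta a) D" by (simp add: D_def)
  show ?case unfolding E BigConj.simps(3)
    apply (rule deriv_taut[where as="[Imp D (Delta ?B),
        Imp (Nab (Conj a ?B)) (Disj (Nab a) (Nab ?B))]"])
     apply (simp add: fsimps del: BigConj.simps; blast)
    using IH F by simp
qed

lemma circ_conj:
  "xs \<noteq> [] \<Longrightarrow> deriv (Imp (BigConj (map (\<lambda>c. Circ (Imp phi c)) xs)) (Circ (Imp phi (BigConj xs))))"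
proof (induction xs rule: BigConj.induct)
  case 1 then show ?case by simp
next
  case (2 a) then show ?case by (auto intro!: A0 simp: fsimps)
next
  case (3 a b xs)
  let ?B = "BigConj (b # xs)"
  define C where "C = BigConj (map (\<lambda>c. Circ (Imp phi c)) (b#xs))"
  have IH: "deriv (Imp C (Circ (Imp phi ?B)))" using 3 by (simp add: C_def)
  have F: "deriv (Imp (Bul (Conj (Imp phi a) (Imp phi ?B))) (Disj (Bul (Imp phi a)) (Bul (Imp phi ?B))))" by (rule A5)
  have G: "deriv (Iff (Circ (Conj (Imp phi a) (Imp phi ?B))) (Circ (Imp phi (Conj a ?B))))"
    by (rule R4, rule A0) (auto simp: fsimps)
  have E: "BigConj (map (\<lambda>c. Circ (Imp phi c)) (a#b#xs)) = Conj (Circ (Imp phi a)) C" by (simp add: C_def)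
  show ?case unfolding E BigConj.simps(3)
    apply (rule deriv_taut[where as="[Imp C (Circ (Imp phi ?B)),
        Imp (Bul (Conj (Imp phi a) (Imp phi ?B))) (Disj (Bul (Imp phi a)) (Bul (Imp phi ?B))),
        Iff (Circ (Conj (Imp phi a) (Imp phi ?B))) (Circ (Imp phi (Conj a ?B)))]"])
     apply (simp add: fsimps del: BigConj.simps; blast)
    using IH F G by simp
qed

theorem proposition7:
  fixes phi :: "'p form" and chis :: "'p form list"
  assumes "chis \<noteq> []"
  shows "deriv (Imp
           (Conj (Delta (Imp (BigConj chis) phi))
             (Conj (BigConj (map Delta chis))
                   (BigConj (map (\<lambda>chi. Circ (Imp phi chi)) chis))))
           (Disj phi (Delta phi)))"
proof -
  define X where "X = BigConj chis"
  define b where "b = Imp phi X"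
  define DS where "DS = BigConj (map Delta chis)"
  define CS where "CS = BigConj (map (\<lambda>chi. Circ (Imp phi chi)) chis)"
  have F1: "deriv (Imp DS (Delta X))" using delta_conj[OF assms] unfolding DS_def X_def .
  have F2: "deriv (Imp (Nab (Conj X (Imp X phi))) (Disj (Nab X) (Nab (Imp X phi))))" by (rule A4)
  have F3: "deriv (Iff (Delta (Conj X (Imp X phi))) (Delta (Conj X phi)))"
    by (rule R3, rule A0) (auto simp: fsimps)
  have F4: "deriv (Iff (Nab (Conj X phi)) (Nab (Neg (Conj X phi))))" by (rule A2)
  have F5: "deriv (Imp CS (Circ b))" using circ_conj[OF assms] unfolding CS_def b_def X_def .
  have F6: "deriv (Imp (Bul (Neg b)) (Neg b))" by (rule A1)
  have F7: "deriv (Imp (Nab b) (Disj (Bul b) (Bul (Neg b))))" by (rule A6)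
  have F8: "deriv (Imp (Nab (Conj (Neg (Conj X phi)) b)) (Disj (Nab (Neg (Conj X phi))) (Nab b)))" by (rule A4)
  have F9: "deriv (Iff (Delta (Conj (Neg (Conj X phi)) b)) (Delta (Neg phi)))"
    by (rule R3, rule A0) (auto simp: fsimps b_def)
  have F10: "deriv (Iff (Nab phi) (Nab (Neg phi)))" by (rule A2)
  have "deriv (Imp (Conj (Delta (Imp X phi)) (Conj DS CS)) (Disj phi (Delta phi)))"
    apply (rule deriv_taut[where as="[Imp DS (Delta X),
      Imp (Nab (Conj X (Imp X phi))) (Disj (Nab X) (Nab (Imp X phi))),
      Iff (Delta (Conj X (Imp X phi))) (Delta (Conj X phi)),
      Iff (Nab (Conj X phi)) (Nab (Neg (Conj X phi))),
      Imp CS (Circ b), Imp (Bul (Neg b)) (Neg b),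
      Imp (Nab b) (Disj (Bul b) (Bul (Neg b))),
      Imp (Nab (Conj (Neg (Conj X phi)) b)) (Disj (Nab (Neg (Conj X phi))) (Nab b)),
      Iff (Delta (Conj (Neg (Conj X phi)) b)) (Delta (Neg phi)),
      Iff (Nab phi) (Nab (Neg phi))]"])
     apply (simp add: fsimps b_def; blast)
    using F1 F2 F3 F4 F5 F6 F7 F8 F9 F10 by simp
  then show ?thesis unfolding X_def DS_def CS_def .
qed

end
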